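(* Let $G=(V,w,m)$ be a finite connected weighted graph satisfying $CD(K,\infty)$ for some $K>0$, let $0=\lambda_0<\lambda_1\le\lambda_2\le\dots$ be the eigenvalues of $-\Delta$ counted with multiplicity, and suppose $\lambda_{\deg_{\max}}=K$. Then for every $x_0\in V$ the function $f=d(x_0,\cdot)$ satisfies $\Gamma_2f=K\Gamma f$ on $V$.
   Context: A weighted graph is $G=(V,w,m)$ with $V$ countable, $w:V\times V\to[0,\infty)$ symmetric with $w(x,x)=0$, $m:V\to(0,\infty)$; $x\sim y$ iff $w(x,y)>0$. Laplacian $\Delta f(x)=\frac1{m(x)}\sum_yw(x,y)(f(y)-f(x))$, self-adjoint on $\ell^2(V,m)$. $\deg(x)=\#\{y:y\sim x\}$, $\deg_{\max}=\max_x\deg(x)$. $d$ is the combinatorial distance. $2\Gamma(f,g)=\Delta(fg)-f\Delta g-g\Delta f$, $2\Gamma_2(f,g)=\Delta\Gamma(f,g)-\Gamma(f,\Delta g)-\Gamma(g,\Delta f)$, $\Gamma f=\Gamma(f,f)$, $\Gamma_2f=\Gamma_2(f,f)$; $CD(K,\infty)$ means $\Gamma_2f(y)\ge K\Gamma f(y)$ for all $f$ and $y$. *)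

theory Defs
  imports "HOL-Analysis.Analysis"
begin

definition weighted_graph :: "('v \<Rightarrow> 'v \<Rightarrow> real) \<Rightarrow> ('v \<Rightarrow> real) \<Rightarrow> bool" where
  "weighted_graph w m \<longleftrightarrow>
     (\<forall>x y. w x y \<ge> 0) \<and> (\<forall>x y. w x y = w y x) \<and> (\<forall>x. w x x = 0) \<and> (\<forall>x. m x > 0)"

definition adj :: "('v \<Rightarrow> 'v \<Rightarrow> real) \<Rightarrow> ('v \<times> 'v) set" where
  "adj w = {(x, y). w x y > 0}"

definition connected_graph :: "('v \<Rightarrow> 'v \<Rightarrow> real) \<Rightarrow> bool" where
  "connected_graph w \<longleftrightarrow> (\<forall>x y. (x, y) \<in> (adj w)\<^sup>*)"

definition comb_dist :: "('v \<Rightarrow> 'v \<Rightarrow> real) \<Rightarrow> 'v \<Rightarrow> 'v \<Rightarrow> nat" where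
  "comb_dist w x y = (LEAST n. (x, y) \<in> (adj w) ^^ n)"

definition deg :: "('v \<Rightarrow> 'v \<Rightarrow> real) \<Rightarrow> 'v \<Rightarrow> nat" where
  "deg w x = card {y. w x y > 0}"

definition deg_max :: "('v::finite \<Rightarrow> 'v \<Rightarrow> real) \<Rightarrow> nat" where
  "deg_max w = Max (range (deg w))"

definition lap :: "('v::finite \<Rightarrow> 'v \<Rightarrow> real) \<Rightarrow> ('v \<Rightarrow> real) \<Rightarrow> ('v \<Rightarrow> real) \<Rightarrow> 'v \<Rightarrow> real" where
  "lap w m f x = (1 / m x) * (\<Sum>y\<in>UNIV. w x y * (f y - f x))"

definition Gam :: "('v::finite \<Rightarrow> 'v \<Rightarrow> real) \<Rightarrow> ('v \<Rightarrow> real) \<Rightarrow> ('v \<Rightarrow> real) \<Rightarrow> ('v \<Rightarrow> real) \<Rightarrow> 'v \<Rightarrow> real" where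
  "Gam w m f g x = (lap w m (\<lambda>y. f y * g y) x - f x * lap w m g x - g x * lap w m f x) / 2"

definition Gam2 :: "('v::finite \<Rightarrow> 'v \<Rightarrow> real) \<Rightarrow> ('v \<Rightarrow> real) \<Rightarrow> ('v \<Rightarrow> real) \<Rightarrow> ('v \<Rightarrow> real) \<Rightarrow> 'v \<Rightarrow> real" where
  "Gam2 w m f g x = (lap w m (Gam w m f g) x - Gam w m f (lap w m g) x - Gam w m g (lap w m f) x) / 2"

definition CD_inf :: "('v::finite \<Rightarrow> 'v \<Rightarrow> real) \<Rightarrow> ('v \<Rightarrow> real) \<Rightarrow> real \<Rightarrow> bool" where
  "CD_inf w m K \<longleftrightarrow> (\<forall>f y. Gam2 w m f f y \<ge> K * Gam w m f f y)"

definition neg_lap_vec :: "('v::finite \<Rightarrow> 'v \<Rightarrow> real) \<Rightarrow> ('v \<Rightarrow> real) \<Rightarrow> real ^ 'v \<Rightarrow> real ^ 'v" where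
  "neg_lap_vec w m f = (\<chi> x. - lap w m (\<lambda>y. f $ y) x)"

definition eigenspace_nl :: "('v::finite \<Rightarrow> 'v \<Rightarrow> real) \<Rightarrow> ('v \<Rightarrow> real) \<Rightarrow> real \<Rightarrow> (real ^ 'v) set" where
  "eigenspace_nl w m l = {f. neg_lap_vec w m f = l *\<^sub>R f}"

definition eigenvalues_nl :: "('v::finite \<Rightarrow> 'v \<Rightarrow> real) \<Rightarrow> ('v \<Rightarrow> real) \<Rightarrow> real set" where
  "eigenvalues_nl w m = {l. \<exists>f. f \<noteq> 0 \<and> neg_lap_vec w m f = l *\<^sub>R f}"

text \<open>Eigenvalues of -\<Delta> in nondecreasing order, each repeated according to its multiplicity
  (dimension of the eigenspace; -\<Delta> is self-adjoint on l^2(V,m)). Index 0 is \<lambda>_0.\<close>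
definition eig_list :: "('v::finite \<Rightarrow> 'v \<Rightarrow> real) \<Rightarrow> ('v \<Rightarrow> real) \<Rightarrow> real list" where
  "eig_list w m = concat (map (\<lambda>l. replicate (dim (eigenspace_nl w m l)) l)
                               (sorted_list_of_set (eigenvalues_nl w m)))"

end

theory Submission
  imports Defs
begin


lemma lap_alt: "lap w m f x = (\<Sum>y\<in>UNIV. w x y * (f y - f x)) / m x"
  by (simp add: lap_def)

lemma Gam_eq: "Gam w m f g x = (\<Sum>y\<in>UNIV. w x y * (f y - f x) * (g y - g x)) / (2 * m x)"
proof -
  have "(\<Sum>y\<in>UNIV. w x y * (f y * g y - f x * g x)) - f x * (\<Sum>y\<in>UNIV. w x y * (g y - g x)) - g x * (\<Sum>y\<in>UNIV. w x y * (f y - f x))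
     = (\<Sum>y\<in>UNIV. w x y * (f y * g y - f x * g x) - f x * (w x y * (g y - g x)) - g x * (w x y * (f y - f x)))"
    by (simp add: sum_distrib_left sum_subtractf)
  also have "\<dots> = (\<Sum>y\<in>UNIV. w x y * (f y - f x) * (g y - g x))"
    by (rule sum.cong) (auto simp: algebra_simps)
  finally have e: "(\<Sum>y\<in>UNIV. w x y * (f y * g y - f x * g x)) - f x * (\<Sum>y\<in>UNIV. w x y * (g y - g x)) - g x * (\<Sum>y\<in>UNIV. w x y * (f y - f x))
     = (\<Sum>y\<in>UNIV. w x y * (f y - f x) * (g y - g x))" .
  have d: "(\<Sum>y\<in>UNIV. w x y * (f y * g y - f x * g x)) / m x - f x * ((\<Sum>y\<in>UNIV. w x y * (g y - g x)) / m x) - g x * ((\<Sum>y\<in>UNIV. w x y * (f y - f x)) / m x)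
     = ((\<Sum>y\<in>UNIV. w x y * (f y * g y - f x * g x)) - f x * (\<Sum>y\<in>UNIV. w x y * (g y - g x)) - g x * (\<Sum>y\<in>UNIV. w x y * (f y - f x))) / m x"
    by (simp add: diff_divide_distrib)
  show ?thesis unfolding Gam_def lap_alt d e by simp
qed


lemma sum_swap_sym:
  fixes w :: "'v::finite \<Rightarrow> 'v \<Rightarrow> real"
  assumes "\<And>x y. w x y = w y x"
  shows "(\<Sum>x\<in>UNIV. \<Sum>y\<in>UNIV. w x y * F x y) = (\<Sum>x\<in>UNIV. \<Sum>y\<in>UNIV. w x y * F y x)"
  by (subst sum.swap) (simp add: assms)

definition Dir :: "('v::finite \<Rightarrow> 'v \<Rightarrow> real) \<Rightarrow> ('v \<Rightarrow> real) \<Rightarrow> ('v \<Rightarrow> real) \<Rightarrow> real" where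
  "Dir w f g = (\<Sum>x\<in>UNIV. \<Sum>y\<in>UNIV. w x y * ((f y - f x) * (g y - g x)))"

context
  fixes w :: "'v::finite \<Rightarrow> 'v \<Rightarrow> real" and m :: "'v \<Rightarrow> real"
  assumes wg: "weighted_graph w m"
begin

lemma wnn: "w x y \<ge> 0" using wg by (simp add: weighted_graph_def)
lemma wsym: "w x y = w y x" using wg by (simp add: weighted_graph_def)
lemma wxx: "w x x = 0" using wg by (simp add: weighted_graph_def)
lemma mpos: "m x > 0" using wg by (simp add: weighted_graph_def)

lemma Dir_sym: "Dir w f g = Dir w g f"
  unfolding Dir_def by (simp add: mult.commute)

lemma sum_Gam: "(\<Sum>x\<in>UNIV. m x * Gam w m f g x) = Dir w f g / 2"
proof -
  have "m x * Gam w m f g x = (\<Sum>y\<in>UNIV. w x y * ((f y - f x) * (g y - g x))) / 2" for x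
    using mpos[of x] by (simp add: Gam_eq mult.assoc)
  then show ?thesis by (simp add: Dir_def sum_divide_distrib)
qed

lemma green: "(\<Sum>x\<in>UNIV. m x * (f x * lap w m g x)) = - Dir w f g / 2"
proof -
  have 1: "m x * (f x * lap w m g x) = (\<Sum>y\<in>UNIV. w x y * (f x * (g y - g x)))" for x
  proof -
    have "m x * (f x * lap w m g x) = f x * (\<Sum>y\<in>UNIV. w x y * (g y - g x))"
      using mpos[of x] by (simp add: lap_alt)
    then show ?thesis by (simp add: sum_distrib_left mult_ac)
  qed
  let ?T = "(\<Sum>x\<in>UNIV. \<Sum>y\<in>UNIV. w x y * (f x * (g y - g x)))"
  have 2: "?T = (\<Sum>x\<in>UNIV. \<Sum>y\<in>UNIV. w x y * (f y * (g x - g y)))"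
    using sum_swap_sym[of w "\<lambda>x y. f x * (g y - g x)"] wsym by blast
  have "?T + ?T = (\<Sum>x\<in>UNIV. \<Sum>y\<in>UNIV. w x y * (f x * (g y - g x)) + w x y * (f y * (g x - g y)))"
    by (subst 2) (simp add: sum.distrib)
  also have "\<dots> = - Dir w f g"
    unfolding Dir_def by (simp add: sum_negf[symmetric] algebra_simps)
  finally show ?thesis using 1 by simp
qed

lemma sum_lap: "(\<Sum>x\<in>UNIV. m x * lap w m g x) = 0"
  using green[of "\<lambda>_. 1" g] by (simp add: Dir_def)

lemma sum_Gam_lap: "(\<Sum>x\<in>UNIV. m x * Gam w m f g x) = - (\<Sum>x\<in>UNIV. m x * (f x * lap w m g x))"
  by (simp add: sum_Gam green)

lemma Gam_comm: "Gam w m f g x = Gam w m g f x"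
  by (simp add: Gam_eq mult_ac)

lemma Gam_nonneg: "Gam w m f f x \<ge> 0"
  using mpos[of x] wnn by (auto simp: Gam_eq mult.assoc intro!: divide_nonneg_pos sum_nonneg)

lemma sum_Gam2: "(\<Sum>x\<in>UNIV. m x * Gam2 w m f f x) = (\<Sum>x\<in>UNIV. m x * (lap w m f x * lap w m f x))"
proof -
  have "Gam2 w m f f x = lap w m (Gam w m f f) x / 2 - Gam w m f (lap w m f) x" for x
    by (simp add: Gam2_def diff_divide_distrib)
  then have "\<And>x. m x * Gam2 w m f f x = m x * lap w m (Gam w m f f) x / 2 - m x * Gam w m f (lap w m f) x"
    by (metis (no_types, opaque_lifting) right_diff_distrib times_divide_eq_right)
  then have "(\<Sum>x\<in>UNIV. m x * Gam2 w m f f x) = (\<Sum>x\<in>UNIV. m x * lap w m (Gam w m f f) x) / 2 - (\<Sum>x\<in>UNIV. m x * Gam w m f (lap w m f) x)"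
    by (simp add: sum_subtractf sum_divide_distrib)
  also have "\<dots> = - (\<Sum>x\<in>UNIV. m x * Gam w m (lap w m f) f x)"
    by (simp add: sum_lap Gam_comm)
  also have "\<dots> = (\<Sum>x\<in>UNIV. m x * (lap w m f x * lap w m f x))"
    by (simp add: sum_Gam_lap)
  finally show ?thesis .
qed

end


lemma quad_zero:
  fixes a b :: real
  assumes "\<And>t. 0 \<le> a * t + b * t^2"
  shows "a = 0"
proof (rule ccontr)
  assume a: "a \<noteq> 0"
  define c where "c = \<bar>b\<bar> + 1"
  have c: "c > 0" "\<bar>b\<bar> \<le> c" by (auto simp: c_def)
  define t where "t = - a / (2 * c)"
  have "a * t + b * t^2 = b * (a*a) / (4 * (c*c)) - (a*a) / (2*c)"
    using c by (simp add: t_def power2_eq_square field_simps)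
  also have "b * (a*a) / (4 * (c*c)) \<le> c * (a*a) / (4 * (c*c))"
    using c by (intro divide_right_mono mult_right_mono) auto
  also have "c * (a*a) / (4 * (c*c)) = (a*a) / (4*c)" using c by simp
  finally have "a * t + b * t^2 \<le> (a*a)/(4*c) - (a*a) / (2*c)" by simp
  also have "\<dots> = - ((a*a)/(4*c))" by (simp add: field_simps)
  finally have "a * t + b * t^2 \<le> - ((a*a)/(4*c))" .
  moreover have "(a*a)/(4*c) > 0" using a c by (auto intro!: divide_pos_pos simp: zero_less_mult_iff linorder_neq_iff)
  ultimately show False using assms[of t] by linarith
qed

definition good :: "('v::finite \<Rightarrow> 'v \<Rightarrow> real) \<Rightarrow> ('v \<Rightarrow> real) \<Rightarrow> real \<Rightarrow> ('v \<Rightarrow> real) \<Rightarrow> bool" where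
  "good w m K f \<longleftrightarrow> (\<forall>y. Gam2 w m f f y = K * Gam w m f f y)"

lemma lap_shift: "lap w m (\<lambda>x. f x + c) = lap w m f"
  by (simp add: lap_def fun_eq_iff)
lemma Gam_shift1: "Gam w m (\<lambda>x. f x + c) g = Gam w m f g"
  by (simp add: Gam_eq fun_eq_iff)
lemma Gam_shift2: "Gam w m g (\<lambda>x. f x + c) = Gam w m g f"
  by (simp add: Gam_eq fun_eq_iff)
lemma Gam2_shift: "Gam2 w m (\<lambda>x. f x + c) (\<lambda>x. f x + c) = Gam2 w m f f"
  by (simp add: Gam2_def lap_shift Gam_shift1 Gam_shift2 fun_eq_iff)
lemma good_shift: "good w m K (\<lambda>x. f x + c) \<longleftrightarrow> good w m K f"
  by (simp add: good_def Gam2_shift Gam_shift1 Gam_shift2)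

context
  fixes w :: "'v::finite \<Rightarrow> 'v \<Rightarrow> real" and m :: "'v \<Rightarrow> real" and K :: real
  assumes wg: "weighted_graph w m" and cd: "CD_inf w m K"
begin

lemma Q_nonneg: "Gam2 w m f f y - K * Gam w m f f y \<ge> 0"
  using cd by (simp add: CD_inf_def)

lemma eig_sums:
  assumes "\<And>x. lap w m g x = - l * g x"
  shows "(\<Sum>x\<in>UNIV. m x * Gam2 w m g g x) = l^2 * (\<Sum>x\<in>UNIV. m x * (g x * g x))"
    and "(\<Sum>x\<in>UNIV. m x * Gam w m g g x) = l * (\<Sum>x\<in>UNIV. m x * (g x * g x))"
proof -
  show "(\<Sum>x\<in>UNIV. m x * Gam2 w m g g x) = l^2 * (\<Sum>x\<in>UNIV. m x * (g x * g x))"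
    using sum_Gam2[OF wg, of g] assms by (simp add: sum_distrib_left power2_eq_square mult_ac)
  show "(\<Sum>x\<in>UNIV. m x * Gam w m g g x) = l * (\<Sum>x\<in>UNIV. m x * (g x * g x))"
    using sum_Gam_lap[OF wg, of g g] assms by (simp add: sum_distrib_left sum_negf[symmetric] mult_ac)
qed

lemma norm_pos:
  assumes "g y \<noteq> 0"
  shows "(\<Sum>x\<in>UNIV. m x * (g x * g x)) > 0"
proof -
  have "(\<Sum>x\<in>UNIV. m x * (g x * g x)) \<ge> m y * (g y * g y)"
  proof (rule member_le_sum)
    show "0 \<le> m x * (g x * g x)" for x using mpos[OF wg, of x] by simp
  qed auto
  moreover have "m y * (g y * g y) > 0" using assms mpos[OF wg, of y] by (auto simp add: zero_less_mult_iff linorder_neq_iff)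
  ultimately show ?thesis by linarith
qed

lemma eigval_cases:
  assumes "\<And>x. lap w m g x = - l * g x" and "g y \<noteq> 0"
  shows "l = 0 \<or> l \<ge> K"
proof -
  let ?N = "(\<Sum>x\<in>UNIV. m x * (g x * g x))"
  have N: "?N > 0" using norm_pos[of g y, OF assms(2)] .
  have "(\<Sum>x\<in>UNIV. m x * Gam w m g g x) \<ge> 0"
    by (intro sum_nonneg mult_nonneg_nonneg less_imp_le[OF mpos[OF wg]] Gam_nonneg[OF wg])
  then have l0: "l \<ge> 0" using eig_sums(2)[OF assms(1)] N by (simp add: zero_le_mult_iff)
  have "(\<Sum>x\<in>UNIV. m x * (Gam2 w m g g x - K * Gam w m g g x)) \<ge> 0"
    by (intro sum_nonneg mult_nonneg_nonneg less_imp_le[OF mpos[OF wg]] Q_nonneg)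
  moreover have "(\<Sum>x\<in>UNIV. m x * (Gam2 w m g g x - K * Gam w m g g x)) = (\<Sum>x\<in>UNIV. m x * Gam2 w m g g x) - K * (\<Sum>x\<in>UNIV. m x * Gam w m g g x)"
    by (simp add: right_diff_distrib sum_subtractf sum_distrib_left mult_ac)
  ultimately have "l^2 * ?N - K * (l * ?N) \<ge> 0"
    using eig_sums[OF assms(1)] by simp
  then have "(l^2 - K * l) * ?N \<ge> 0" by (simp add: algebra_simps)
  then have "l^2 - K*l \<ge> 0" using N by (simp add: zero_le_mult_iff)
  then have "l * (l - K) \<ge> 0" by (simp add: power2_eq_square algebra_simps)
  then show ?thesis using l0 by (auto simp: zero_le_mult_iff)
qed

lemma eig_good:
  assumes "\<And>x. lap w m g x = - K * g x"
  shows "good w m K g"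
proof -
  let ?N = "(\<Sum>x\<in>UNIV. m x * (g x * g x))"
  have "(\<Sum>x\<in>UNIV. m x * (Gam2 w m g g x - K * Gam w m g g x)) = (\<Sum>x\<in>UNIV. m x * Gam2 w m g g x) - K * (\<Sum>x\<in>UNIV. m x * Gam w m g g x)"
    by (simp add: right_diff_distrib sum_subtractf sum_distrib_left mult_ac)
  also have "\<dots> = K^2 * ?N - K * (K * ?N)"
    using eig_sums[OF assms] by simp
  also have "\<dots> = 0" by (simp add: power2_eq_square)
  finally have "\<forall>x\<in>UNIV. m x * (Gam2 w m g g x - K * Gam w m g g x) = 0"
    by (subst sum_nonneg_eq_0_iff[symmetric]) (auto intro!: mult_nonneg_nonneg less_imp_le[OF mpos[OF wg]] Q_nonneg)
  then show ?thesis using mpos[OF wg] unfolding good_def by (metis UNIV_I less_irrefl mult_eq_0_iff right_minus_eq)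
qed

end


lemma Gam2_alt: "Gam2 w m f f x = lap w m (Gam w m f f) x / 2 - Gam w m f (lap w m f) x"
  by (simp add: Gam2_def diff_divide_distrib)

context
  fixes w :: "'v::finite \<Rightarrow> 'v \<Rightarrow> real" and m :: "'v \<Rightarrow> real" and K :: real
  assumes wg: "weighted_graph w m" and cd: "CD_inf w m K"
begin

lemma zero_ball2:
  assumes good: "good w m K h" and h0: "h x = 0" and hN: "\<And>y. w x y > 0 \<Longrightarrow> h y = 0"
    and xy: "w x y > 0" and yz: "w y z > 0"
  shows "h z = 0"
proof -
  have z1: "w x u * (h u - h x) = 0" for u
  proof (cases "w x u = 0")
    case False then have "w x u > 0" using wnn[OF wg, of x u] by linarith
    then show ?thesis using hN h0 by simp
  qed simp
  have G0: "Gam w m h h x = 0"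
    unfolding Gam_eq using z1 by (simp add: sum.neutral)
  have G1: "Gam w m h (lap w m h) x = 0"
    unfolding Gam_eq using z1 by (simp add: sum.neutral)
  have "Gam2 w m h h x = 0" using good G0 by (simp add: good_def)
  then have "lap w m (Gam w m h h) x = 0" using G1 by (simp add: Gam2_alt)
  then have "(\<Sum>u\<in>UNIV. w x u * (Gam w m h h u - Gam w m h h x)) = 0"
    using mpos[OF wg, of x] by (simp add: lap_alt)
  then have "(\<Sum>u\<in>UNIV. w x u * Gam w m h h u) = 0" using G0 by simp
  then have "\<forall>u\<in>UNIV. w x u * Gam w m h h u = 0"
    by (subst sum_nonneg_eq_0_iff[symmetric]) (auto intro!: mult_nonneg_nonneg wnn[OF wg] Gam_nonneg[OF wg])
  then have "Gam w m h h y = 0" using xy by (metis UNIV_I less_irrefl mult_eq_0_iff)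
  then have "(\<Sum>v\<in>UNIV. w y v * (h v - h y) * (h v - h y)) = 0"
    using mpos[OF wg, of y] by (simp add: Gam_eq)
  then have "\<forall>v\<in>UNIV. w y v * (h v - h y) * (h v - h y) = 0"
    by (subst sum_nonneg_eq_0_iff[symmetric]) (auto simp: mult.assoc intro: mult_nonneg_nonneg[OF wnn[OF wg] zero_le_square])
  then have "w y z * (h z - h y) * (h z - h y) = 0" by auto
  moreover have "h y = 0" using hN xy .
  ultimately show ?thesis using yz by simp
qed

lemma const_ball2:
  assumes good: "good w m K f" and h0: "f x = c" and hN: "\<And>y. w x y > 0 \<Longrightarrow> f y = c"
    and xy: "w x y > 0" and yz: "w y z > 0"
  shows "f z = c"
proof -
  have "good w m K (\<lambda>u. f u + (-c))" using good good_shift by blast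
  from zero_ball2[OF this, of x y z] assms show ?thesis by simp
qed

lemma good_const:
  assumes conn: "connected_graph w" and good: "good w m K f" and h0: "f x = c"
    and hN: "\<And>y. w x y > 0 \<Longrightarrow> f y = c"
  shows "f u = c"
proof -
  have "(x, u) \<in> (adj w)\<^sup>*" using conn by (simp add: connected_graph_def)
  then have "f u = c \<and> (\<forall>v. w u v > 0 \<longrightarrow> f v = c)"
  proof (induction rule: rtrancl_induct)
    case base then show ?case using h0 hN by auto
  next
    case (step y y')
    then have yy: "w y y' > 0" by (simp add: adj_def)
    have "f v = c" if "w y' v > 0" for v
      using const_ball2[OF good, of y c y' v] step yy that by auto
    then show ?case using step yy by auto
  qed
  then show ?thesis by simp
qed

lemma ext_eq:
  assumes good: "good w m K g" and zx: "z \<noteq> x" and wxz: "w x z = 0"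
  shows "(\<Sum>y\<in>UNIV. w x y * w y z / m y * ((g z - g y) - (g y - g x))) = 0"
proof -
  define f where "f t u = g u + (if u = z then t else 0)" for t u
  have Gam_pert: "Gam w m (f t) (f t) y = Gam w m g g y + w y z * (2*t*(g z - g y) + t^2) / (2 * m y)"
    if "y \<noteq> z" for t y
  proof -
    have "(\<Sum>u\<in>UNIV. w y u * (f t u - f t y) * (f t u - f t y))
        = (\<Sum>u\<in>UNIV. w y u * (g u - g y) * (g u - g y) + (if u = z then w y z * (2*t*(g z - g y) + t^2) else 0))"
      using that by (intro sum.cong) (auto simp: f_def power2_eq_square algebra_simps)
    also have "\<dots> = (\<Sum>u\<in>UNIV. w y u * (g u - g y) * (g u - g y)) + w y z * (2*t*(g z - g y) + t^2)"
      by (simp add: sum.distrib)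
    finally show ?thesis by (simp add: Gam_eq add_divide_distrib)
  qed
  have lap_pert: "lap w m (f t) y = lap w m g y + w y z * t / m y" if "y \<noteq> z" for t y
  proof -
    have "(\<Sum>u\<in>UNIV. w y u * (f t u - f t y))
        = (\<Sum>u\<in>UNIV. w y u * (g u - g y) + (if u = z then w y z * t else 0))"
      using that by (intro sum.cong) (auto simp: f_def algebra_simps)
    also have "\<dots> = (\<Sum>u\<in>UNIV. w y u * (g u - g y)) + w y z * t"
      by (simp add: sum.distrib)
    finally show ?thesis by (simp add: lap_alt add_divide_distrib)
  qed
  have Gx: "Gam w m (f t) (f t) x = Gam w m g g x" for t
    unfolding Gam_eq using zx wxz by (intro arg_cong[where f="\<lambda>s. s / _"] sum.cong) (auto simp: f_def)
  have Lx: "lap w m (f t) x = lap w m g x" for t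
    unfolding lap_alt using zx wxz by (intro arg_cong[where f="\<lambda>s. s / _"] sum.cong) (auto simp: f_def)
  define S1 where "S1 t = (\<Sum>y\<in>UNIV. w x y * (w y z * (2*t*(g z - g y) + t^2) / (2 * m y)))" for t
  define S2 where "S2 t = (\<Sum>y\<in>UNIV. w x y * ((g y - g x) * (w y z * t / m y)))" for t
  have LG: "lap w m (Gam w m (f t) (f t)) x = lap w m (Gam w m g g) x + S1 t / m x" for t
  proof -
    have "(\<Sum>y\<in>UNIV. w x y * (Gam w m (f t) (f t) y - Gam w m (f t) (f t) x))
      = (\<Sum>y\<in>UNIV. w x y * (Gam w m g g y - Gam w m g g x) + w x y * (w y z * (2*t*(g z - g y) + t^2) / (2 * m y)))"
    proof (intro sum.cong refl)
      fix y show "w x y * (Gam w m (f t) (f t) y - Gam w m (f t) (f t) x) =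
         w x y * (Gam w m g g y - Gam w m g g x) + w x y * (w y z * (2*t*(g z - g y) + t^2) / (2 * m y))"
        using wxz by (cases "y = z") (auto simp: Gam_pert Gx algebra_simps)
    qed
    then show ?thesis by (simp add: lap_alt S1_def sum.distrib add_divide_distrib)
  qed
  have GL: "Gam w m (f t) (lap w m (f t)) x = Gam w m g (lap w m g) x + S2 t / (2 * m x)" for t
  proof -
    have "(\<Sum>y\<in>UNIV. w x y * (f t y - f t x) * (lap w m (f t) y - lap w m (f t) x))
      = (\<Sum>y\<in>UNIV. w x y * (g y - g x) * (lap w m g y - lap w m g x) + w x y * ((g y - g x) * (w y z * t / m y)))"
    proof (intro sum.cong refl)
      fix y show "w x y * (f t y - f t x) * (lap w m (f t) y - lap w m (f t) x) =
         w x y * (g y - g x) * (lap w m g y - lap w m g x) + w x y * ((g y - g x) * (w y z * t / m y))"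
        using wxz zx mpos[OF wg, of y] by (cases "y = z") (auto simp: lap_pert Lx f_def field_simps)
    qed
    then show ?thesis by (simp add: Gam_eq S2_def sum.distrib add_divide_distrib)
  qed
  define A where "A = (\<Sum>y\<in>UNIV. w x y * w y z / m y * ((g z - g y) - (g y - g x)))"
  define B where "B = (\<Sum>y\<in>UNIV. w x y * w y z / m y / 2)"
  have SS: "S1 t - S2 t = t * A + t^2 * B" for t
  proof -
    have "S1 t - S2 t = (\<Sum>y\<in>UNIV. w x y * (w y z * (2*t*(g z - g y) + t^2) / (2 * m y)) - w x y * ((g y - g x) * (w y z * t / m y)))"
      by (simp add: S1_def S2_def sum_subtractf)
    also have "\<dots> = (\<Sum>y\<in>UNIV. t * (w x y * w y z / m y * ((g z - g y) - (g y - g x))) + t^2 * (w x y * w y z / m y / 2))"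
    proof (intro sum.cong refl)
      fix y have "m y > 0" by (rule mpos[OF wg])
      then show "w x y * (w y z * (2*t*(g z - g y) + t^2) / (2 * m y)) - w x y * ((g y - g x) * (w y z * t / m y)) =
         t * (w x y * w y z / m y * ((g z - g y) - (g y - g x))) + t^2 * (w x y * w y z / m y / 2)"
        by (simp add: field_simps power2_eq_square)
    qed
    also have "\<dots> = t * A + t^2 * B"
      by (simp add: A_def B_def sum.distrib sum_distrib_left)
    finally show ?thesis .
  qed
  have Qg: "Gam2 w m g g x - K * Gam w m g g x = 0" using good by (simp add: good_def)
  have "0 \<le> t * A + t^2 * B" for t
  proof -
    have "0 \<le> Gam2 w m (f t) (f t) x - K * Gam w m (f t) (f t) x" by (rule Q_nonneg[OF wg cd])
    also have "\<dots> = (Gam2 w m g g x - K * Gam w m g g x) + (S1 t - S2 t) / (2 * m x)"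
      by (simp add: Gam2_alt LG GL Gx diff_divide_distrib)
    also have "\<dots> = (t * A + t^2 * B) / (2 * m x)" using Qg SS by simp
    finally show ?thesis using mpos[OF wg, of x] by (simp add: zero_le_divide_iff)
  qed
  then have "A = 0" by (intro quad_zero[of A B]) (metis mult.commute)
  then show ?thesis by (simp add: A_def)
qed

end


context
  fixes w :: "'v::finite \<Rightarrow> 'v \<Rightarrow> real" and m :: "'v \<Rightarrow> real" and K :: real
  assumes wg: "weighted_graph w m" and cd: "CD_inf w m K" and conn: "connected_graph w"
begin

lemma dist_ex: "\<exists>n. (x, y) \<in> (adj w) ^^ n"
  using conn by (simp add: connected_graph_def rtrancl_power)

lemma dist_mem: "(x, y) \<in> (adj w) ^^ (comb_dist w x y)"
  unfolding comb_dist_def using dist_ex by (rule LeastI_ex)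

lemma dist_le: "(x, y) \<in> (adj w) ^^ n \<Longrightarrow> comb_dist w x y \<le> n"
  unfolding comb_dist_def by (rule Least_le)

lemma dist_self: "comb_dist w x x = 0"
  using dist_le[of x x 0] by simp

lemma dist_step: "w y z > 0 \<Longrightarrow> comb_dist w x z \<le> comb_dist w x y + 1"
  using dist_le[of x z "Suc (comb_dist w x y)"] dist_mem[of x y]
  by (auto simp: adj_def intro: relpow_Suc_I)

lemma dist_zero: "comb_dist w x y = 0 \<Longrightarrow> y = x"
  using dist_mem[of x y] by simp

lemma dist_pred:
  assumes "comb_dist w x z = Suc k"
  shows "\<exists>y. comb_dist w x y = k \<and> w y z > 0"
proof -
  from dist_mem[of x z] assms obtain y where "(x, y) \<in> (adj w) ^^ k" "(y, z) \<in> adj w"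
    by (auto elim: relpow_Suc_E)
  then have "comb_dist w x y \<le> k" "w y z > 0" using dist_le by (auto simp: adj_def)
  moreover have "comb_dist w x z \<le> comb_dist w x y + 1" using dist_step \<open>w y z > 0\<close> by blast
  ultimately show ?thesis using assms by (intro exI[of _ y]) auto
qed

lemma dist_is_good:
  assumes good: "good w m K g" and g0: "g x0 = 0" and g1: "\<And>y. w x0 y > 0 \<Longrightarrow> g y = 1"
  shows "g z = real (comb_dist w x0 z)"
proof -
  have "\<forall>z. comb_dist w x0 z = n \<longrightarrow> g z = real n" for n
  proof (induction n rule: less_induct)
    case (less n)
    show ?case
    proof (intro allI impI)
      fix z assume dz: "comb_dist w x0 z = n"
      show "g z = real n"
      proof (cases n)
        case 0 then show ?thesis using dz dist_zero g0 by auto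
      next
        case (Suc k)
        show ?thesis
        proof (cases k)
          case 0
          obtain y where "comb_dist w x0 y = 0" "w y z > 0" using dist_pred dz Suc 0 by blast
          then have "y = x0" "w x0 z > 0" using dist_zero by auto
          then show ?thesis using g1 Suc 0 by simp
        next
          case (Suc j)
          obtain y where dy: "comb_dist w x0 y = k" and yz: "w y z > 0" using dist_pred dz \<open>n = Suc k\<close> by blast
          obtain x where dx: "comb_dist w x0 x = j" and xy: "w x y > 0" using dist_pred dy Suc by blast
          have zx: "z \<noteq> x" using dz dx \<open>n = Suc k\<close> Suc by auto
          have wxz: "w x z = 0"
          proof (rule ccontr)
            assume "w x z \<noteq> 0"
            then have "w x z > 0" using wnn[OF wg, of x z] by linarith
            then have "comb_dist w x0 z \<le> j + 1" using dist_step dx by fastforce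
            then show False using dz \<open>n = Suc k\<close> Suc by simp
          qed
          have gx: "g x = real j" using less.IH[of j] dx \<open>n = Suc k\<close> Suc by auto
          define c where "c u = w x u * w u z / m u" for u
          have cnn: "c u \<ge> 0" for u
            unfolding c_def using wnn[OF wg] mpos[OF wg, of u] by simp
          have termeq: "c u * ((g z - g u) - (g u - g x)) = c u * (g z - real n)" for u
          proof (cases "c u = 0")
            case False
            then have "w x u > 0" "w u z > 0" using wnn[OF wg, of x u] wnn[OF wg, of u z]
              unfolding c_def by (auto simp: less_le)
            then have "comb_dist w x0 u \<le> j + 1" "comb_dist w x0 z \<le> comb_dist w x0 u + 1"
              using dist_step dx by fastforce+
            then have "comb_dist w x0 u = k" using dz \<open>n = Suc k\<close> Suc by simp
            then have "g u = real k" using less.IH[of k] \<open>n = Suc k\<close> by auto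
            then show ?thesis using gx \<open>n = Suc k\<close> Suc by (simp add: algebra_simps)
          qed simp
          have "(\<Sum>u\<in>UNIV. c u * ((g z - g u) - (g u - g x))) = 0"
            using ext_eq[OF wg cd good zx wxz] by (simp add: c_def)
          moreover have "(\<Sum>u\<in>UNIV. c u * ((g z - g u) - (g u - g x))) = (\<Sum>u\<in>UNIV. c u * (g z - real n))"
            by (rule sum.cong) (simp_all only: termeq)
          ultimately have "(\<Sum>u\<in>UNIV. c u) * (g z - real n) = 0"
            by (simp add: sum_distrib_right)
          moreover have "(\<Sum>u\<in>UNIV. c u) \<ge> c y" by (rule member_le_sum) (auto intro: cnn)
          moreover have "c y > 0" unfolding c_def using xy yz mpos[OF wg, of y] by simp
          ultimately show ?thesis by simp
        qed
      qed
    qed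
  qed
  then show ?thesis by blast
qed

end


lemma lap_add: "lap w m (\<lambda>y. f y + g y) x = lap w m f x + lap w m g x"
proof -
  have "(\<Sum>y\<in>UNIV. w x y * ((f y + g y) - (f x + g x))) = (\<Sum>y\<in>UNIV. w x y * (f y - f x)) + (\<Sum>y\<in>UNIV. w x y * (g y - g x))"
    by (simp add: sum.distrib[symmetric] algebra_simps)
  then show ?thesis by (simp add: lap_alt add_divide_distrib)
qed

lemma lap_scale: "lap w m (\<lambda>y. c * f y) x = c * lap w m f x"
proof -
  have "(\<Sum>y\<in>UNIV. w x y * (c * f y - c * f x)) = c * (\<Sum>y\<in>UNIV. w x y * (f y - f x))"
    by (simp add: sum_distrib_left algebra_simps)
  then show ?thesis by (simp add: lap_alt)
qed

lemma lap_const: "lap w m (\<lambda>y. c) x = 0"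
  by (simp add: lap_def)

lemma linear_nl: "linear (neg_lap_vec w m)"
  by (rule linearI) (simp_all add: neg_lap_vec_def vec_eq_iff lap_add lap_scale)

lemma eigsp_iff: "f \<in> eigenspace_nl w m l \<longleftrightarrow> (\<forall>x. lap w m (\<lambda>y. f $ y) x = - l * f $ x)"
  by (simp add: eigenspace_nl_def neg_lap_vec_def vec_eq_iff) (metis minus_equation_iff mult_minus_left)

lemma subspace_eigsp: "subspace (eigenspace_nl w m l)"
  unfolding subspace_def eigenspace_nl_def
  by (auto simp: scaleR_add_right linear_add[OF linear_nl] linear_scale[OF linear_nl] linear_0[OF linear_nl])

lemma test1: fixes R :: "real^'n \<Rightarrow> real^'n" assumes "linear R" "inj_on R S" "subspace S"
  shows "dim (R ` S) = dim S" "subspace (R ` S)"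
  using assms 
  apply (metis dim_image_eq span_eq_iff)
  using assms linear_subspace_image by blast

lemma test2: "DIM(real^'n) = CARD('n)" by simp



context
  fixes w :: "'v::finite \<Rightarrow> 'v \<Rightarrow> real" and m :: "'v \<Rightarrow> real" and K :: real
  assumes wg: "weighted_graph w m" and cd: "CD_inf w m K" and conn: "connected_graph w"
    and Kpos: "K > 0"
begin

lemma dist_good_from_dim:
  assumes dimK: "dim (eigenspace_nl w m K) \<ge> deg w x0"
  shows "good w m K (\<lambda>x. real (comb_dist w x0 x))"
proof -
  define E where "E = eigenspace_nl w m K"
  define N where "N = {y. w x0 y > 0}"
  define R :: "real^'v \<Rightarrow> real^'v" where "R e = (\<chi> z. if w x0 z > 0 then e$z - e$x0 else 0)" for e
  have linR: "linear R"
    by (rule linearI) (simp_all add: R_def vec_eq_iff algebra_simps)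
  have subE: "subspace E" unfolding E_def by (rule subspace_eigsp)
  have injR: "inj_on R E"
  proof (rule inj_onI)
    fix e e' assume e: "e \<in> E" and e': "e' \<in> E" and eq: "R e = R e'"
    define d where "d = e - e'"
    have dE: "d \<in> E" using subspace_diff[OF subE e e'] by (simp add: d_def)
    have Rd: "R d = 0" using linear_diff[OF linR, of e e'] eq by (simp add: d_def)
    have lapd: "lap w m (\<lambda>y. d $ y) x = - K * d $ x" for x using dE by (simp add: E_def eigsp_iff)
    have gd: "good w m K (\<lambda>y. d $ y)" by (rule eig_good[OF wg cd]) (use lapd in auto)
    have nb: "d $ y = d $ x0" if "w x0 y > 0" for y
      using arg_cong[where f="\<lambda>v. v $ y", OF Rd] that by (simp add: R_def)
    have cst: "d $ u = d $ x0" for u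
      by (rule good_const[OF wg cd conn gd]) (simp, erule nb)
    then have "(\<lambda>y. d $ y) = (\<lambda>y. d $ x0)" by (intro ext) (rule cst)
    then have "lap w m (\<lambda>y. d $ y) x0 = 0" using lap_const[of w m "d $ x0" x0] by metis
    then have "d $ x0 = 0" using lapd[of x0] Kpos by simp
    then have "d = 0" unfolding vec_eq_iff by (metis cst zero_index)
    then show "e = e'" by (simp add: d_def)
  qed
  define T where "T = {v::real^'v. \<forall>z. \<not> w x0 z > 0 \<longrightarrow> v $ z = 0}"
  have subT: "subspace T" unfolding subspace_def T_def by simp
  have RT: "R ` E \<subseteq> T" unfolding T_def R_def by auto
  have Tspan: "T \<subseteq> span ((\<lambda>z. axis z (1::real)) ` N)"
  proof
    fix v assume v: "v \<in> T"
    have "v = (\<Sum>i\<in>UNIV. (v$i) *s axis i (1::real))" by (simp add: basis_expansion)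
    also have "\<dots> \<in> span ((\<lambda>z. axis z (1::real)) ` N)"
    proof (rule span_sum)
      fix i :: 'v
      show "(v$i) *s axis i (1::real) \<in> span ((\<lambda>z. axis z (1::real)) ` N)"
      proof (cases "i \<in> N")
        case True then show ?thesis
          by (simp add: scalar_mult_eq_scaleR span_base span_mul)
      next
        case False then have "v $ i = 0" using v by (simp add: T_def N_def)
        then show ?thesis by (simp add: span_zero)
      qed
    qed
    finally show "v \<in> span ((\<lambda>z. axis z (1::real)) ` N)" .
  qed
  have dimT: "dim T \<le> card N"
    using dim_le_card[OF Tspan] card_image_le[of N "\<lambda>z. axis z (1::real)"] by simp
  have dimRE: "dim (R ` E) = dim E"
    using linR injR subE by (metis dim_image_eq span_eq_iff)
  have subRE: "subspace (R ` E)" using linR subE linear_subspace_image by blast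
  have "deg w x0 = card N" by (simp add: deg_def N_def)
  then have "R ` E = T"
    using subspace_dim_equal[OF subRE subT RT] dimT dimRE dimK by (simp add: E_def)
  moreover have "(\<chi> z. if w x0 z > 0 then 1 else 0) \<in> T" by (simp add: T_def)
  ultimately obtain e where eE: "e \<in> E" and Re: "R e = (\<chi> z. if w x0 z > 0 then 1 else 0)"
    by (metis imageE)
  define g where "g y = e $ y + (- (e $ x0))" for y
  have "good w m K (\<lambda>y. e $ y)"
    by (rule eig_good[OF wg cd]) (use eE in \<open>auto simp: E_def eigsp_iff\<close>)
  then have gg: "good w m K g" unfolding g_def using good_shift by blast
  have g1: "g y = 1" if "w x0 y > 0" for y
    using arg_cong[where f="\<lambda>v. v $ y", OF Re] that by (simp add: R_def g_def)
  have "g z = real (comb_dist w x0 z)" for z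
    by (rule dist_is_good[OF wg cd conn gg]) (simp add: g_def, erule g1)
  then have "(\<lambda>x. real (comb_dist w x0 x)) = g" by auto
  then show ?thesis using gg by simp
qed

end


definition ipm :: "('v::finite \<Rightarrow> real) \<Rightarrow> real^'v \<Rightarrow> real^'v \<Rightarrow> real" where
  "ipm m a b = (\<Sum>x\<in>UNIV. m x * (a $ x * b $ x))"

lemma ipm_sym: "ipm m a b = ipm m b a" by (simp add: ipm_def mult_ac)
lemma ipm_add_left: "ipm m (a + b) c = ipm m a c + ipm m b c"
  by (simp add: ipm_def sum.distrib[symmetric] algebra_simps)
lemma ipm_add_right: "ipm m c (a + b) = ipm m c a + ipm m c b"
  by (simp add: ipm_def sum.distrib[symmetric] algebra_simps)
lemma ipm_diff_left: "ipm m (a - b) c = ipm m a c - ipm m b c"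
  by (simp add: ipm_def sum_subtractf[symmetric] algebra_simps)
lemma ipm_scale_left: "ipm m (r *\<^sub>R a) c = r * ipm m a c"
  by (simp add: ipm_def sum_distrib_left algebra_simps)
lemma ipm_scale_right: "ipm m c (r *\<^sub>R a) = r * ipm m c a"
  by (simp add: ipm_def sum_distrib_left algebra_simps)
lemma ipm_zero_left[simp]: "ipm m 0 c = 0" by (simp add: ipm_def)

context
  fixes w :: "'v::finite \<Rightarrow> 'v \<Rightarrow> real" and m :: "'v \<Rightarrow> real"
  assumes wg: "weighted_graph w m"
begin

lemma ipm_term_nonneg: "0 \<le> m x * (a $ x * a $ x)"
  by (rule mult_nonneg_nonneg[OF less_imp_le[OF mpos[OF wg]] zero_le_square])

lemma ipm_nonneg: "ipm m a a \<ge> 0"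
  unfolding ipm_def by (intro sum_nonneg ipm_term_nonneg)

lemma ipm_eq0: "ipm m a a = 0 \<longleftrightarrow> a = 0"
proof
  assume "ipm m a a = 0"
  then have "\<forall>x\<in>UNIV. m x * (a $ x * a $ x) = 0"
    unfolding ipm_def by (subst sum_nonneg_eq_0_iff[symmetric]) (auto intro: ipm_term_nonneg)
  then have "m x * (a $ x * a $ x) = 0" for x by blast
  then have "a $ x = 0" for x using mpos[OF wg, of x] by (metis mult_eq_0_iff less_irrefl)
  then show "a = 0" by (simp add: vec_eq_iff)
qed simp

lemma self_adj: "ipm m (neg_lap_vec w m a) b = ipm m a (neg_lap_vec w m b)"
proof -
  have 1: "ipm m (neg_lap_vec w m a) b = - (\<Sum>x\<in>UNIV. m x * ((\<lambda>y. b $ y) x * lap w m (\<lambda>y. a $ y) x))"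
    by (simp add: ipm_def neg_lap_vec_def sum_negf[symmetric] mult_ac)
  have 2: "ipm m a (neg_lap_vec w m b) = - (\<Sum>x\<in>UNIV. m x * ((\<lambda>y. a $ y) x * lap w m (\<lambda>y. b $ y) x))"
    by (simp add: ipm_def neg_lap_vec_def sum_negf[symmetric] mult_ac)
  show ?thesis unfolding 1 2 green[OF wg] by (simp add: Dir_sym[OF wg])
qed

lemma eig_orth:
  assumes "neg_lap_vec w m a = l *\<^sub>R a" "neg_lap_vec w m b = l' *\<^sub>R b" "l \<noteq> l'"
  shows "ipm m a b = 0"
proof -
  have "l * ipm m a b = l' * ipm m a b"
    using self_adj[of a b] assms by (simp add: ipm_scale_left ipm_scale_right)
  then show ?thesis using assms(3) by simp
qed


end

context
  fixes w :: "'v::finite \<Rightarrow> 'v \<Rightarrow> real" and m :: "'v \<Rightarrow> real"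
  assumes wg: "weighted_graph w m"
begin
lemma finite_eigs: "finite (eigenvalues_nl w m)"
proof -
  let ?S = "eigenvalues_nl w m"
  define ev where "ev l = (SOME f. f \<noteq> 0 \<and> neg_lap_vec w m f = l *\<^sub>R f)" for l
  have ev: "ev l \<noteq> 0 \<and> neg_lap_vec w m (ev l) = l *\<^sub>R ev l" if "l \<in> ?S" for l
    unfolding ev_def by (rule someI_ex) (use that in \<open>simp add: eigenvalues_nl_def\<close>)
  define D :: "real^'v \<Rightarrow> real^'v" where "D u = (\<chi> x. sqrt (m x) * u $ x)" for u
  have sq: "sqrt (m x) * sqrt (m x) = m x" for x using mpos[OF wg, of x] by simp
  have Dinner: "D a \<bullet> D b = ipm m a b" for a b
    unfolding D_def inner_vec_def ipm_def
  proof (intro sum.cong refl)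
    fix x
    have "(\<chi> x. sqrt (m x) * a $ x) $ x \<bullet> (\<chi> x. sqrt (m x) * b $ x) $ x = (sqrt (m x) * sqrt (m x)) * (a $ x * b $ x)"
      by (simp add: mult_ac)
    then show "(\<chi> x. sqrt (m x) * a $ x) $ x \<bullet> (\<chi> x. sqrt (m x) * b $ x) $ x = m x * (a $ x * b $ x)"
      by (simp only: sq)
  qed
  have Dinj: "D a = D b \<Longrightarrow> a = b" for a b
  proof -
    assume "D a = D b"
    then have h: "sqrt (m x) * a $ x = sqrt (m x) * b $ x" for x by (simp add: D_def vec_eq_iff)
    have "a $ x = b $ x" for x using h[of x] mpos[OF wg, of x] by simp
    then show "a = b" by (simp add: vec_eq_iff)
  qed
  have D00: "D 0 = 0" by (simp add: D_def vec_eq_iff)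
  have D0: "D a = 0 \<Longrightarrow> a = 0" for a
    using Dinj[of a 0] D00 by simp
  have inj: "inj_on (D \<circ> ev) ?S"
  proof (rule inj_onI)
    fix l l' assume l: "l \<in> ?S" and l': "l' \<in> ?S" and "(D \<circ> ev) l = (D \<circ> ev) l'"
    then have "D (ev l) = D (ev l')" by simp
    then have "ev l = ev l'" by (rule Dinj)
    then have "l *\<^sub>R ev l = l' *\<^sub>R ev l" using ev[OF l] ev[OF l'] by metis
    then show "l = l'" using ev[OF l] by (metis scaleR_cancel_right)
  qed
  have "pairwise orthogonal ((D \<circ> ev) ` ?S)"
    unfolding pairwise_def orthogonal_def
  proof (clarify)
    fix l l' assume l: "l \<in> ?S" and l': "l' \<in> ?S" and ne: "(D \<circ> ev) l \<noteq> (D \<circ> ev) l'"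
    then have "l \<noteq> l'" by blast
    have "(D \<circ> ev) l \<bullet> (D \<circ> ev) l' = ipm m (ev l) (ev l')" by (simp add: Dinner)
    also have "\<dots> = 0" using eig_orth[OF wg, of "ev l" l "ev l'" l'] ev[OF l] ev[OF l'] \<open>l \<noteq> l'\<close> by blast
    finally show "(D \<circ> ev) l \<bullet> (D \<circ> ev) l' = 0" .
  qed
  moreover have "0 \<notin> (D \<circ> ev) ` ?S"
  proof
    assume "0 \<in> (D \<circ> ev) ` ?S"
    then obtain l where l: "l \<in> ?S" and l0: "0 = (D \<circ> ev) l" by (rule imageE)
    from l0 have "D (ev l) = 0" by simp
    then have "ev l = 0" by (rule D0)
    then show False using ev[OF l] by simp
  qed
  ultimately have "independent ((D \<circ> ev) ` ?S)" by (rule pairwise_orthogonal_independent)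
  then have "finite ((D \<circ> ev) ` ?S)" using independent_bound by blast
  then show ?thesis using inj finite_imageD by blast
qed

end


lemma dim_UN_le:
  fixes E :: "'i \<Rightarrow> (real^'n) set"
  assumes "finite F"
  shows "dim (\<Union>l\<in>F. E l) \<le> (\<Sum>l\<in>F. dim (E l))"
proof -
  have "\<forall>l. \<exists>B. B \<subseteq> E l \<and> independent B \<and> E l \<subseteq> span B \<and> card B = dim (E l)"
    by (metis basis_exists)
  then obtain B where B: "\<And>l. B l \<subseteq> E l" "\<And>l. independent (B l)" "\<And>l. E l \<subseteq> span (B l)"
    "\<And>l. card (B l) = dim (E l)" by metis
  have fin: "finite (B l)" for l using independent_bound[OF B(2)] by simp
  have "(\<Union>l\<in>F. E l) \<subseteq> span (\<Union>l\<in>F. B l)"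
  proof (rule UN_least)
    fix l assume "l \<in> F"
    then have "span (B l) \<subseteq> span (\<Union>l\<in>F. B l)" by (intro span_mono) blast
    then show "E l \<subseteq> span (\<Union>l\<in>F. B l)" using B(3)[of l] by blast
  qed
  moreover have "finite (\<Union>l\<in>F. B l)" using assms fin by simp
  ultimately have "dim (\<Union>l\<in>F. E l) \<le> card (\<Union>l\<in>F. B l)"
    by (rule dim_le_card)
  also have "\<dots> \<le> (\<Sum>l\<in>F. card (B l))" by (rule card_UN_le[OF assms])
  also have "\<dots> = (\<Sum>l\<in>F. dim (E l))" using B(4) by simp
  finally show ?thesis .
qed

context
  fixes w :: "'v::finite \<Rightarrow> 'v \<Rightarrow> real" and m :: "'v \<Rightarrow> real"
  assumes wg: "weighted_graph w m"
begin

definition "eigX = (\<Union>l\<in>eigenvalues_nl w m. eigenspace_nl w m l)"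

lemma eigX_eq: "eigX = (\<Union>l\<in>eigenvalues_nl w m. eigenspace_nl w m l)"
  unfolding eigX_def by simp

lemma in_eigX: "l \<in> eigenvalues_nl w m \<Longrightarrow> u \<in> eigenspace_nl w m l \<Longrightarrow> u \<in> eigX"
  unfolding eigX_def by blast

lemma NL_X: "neg_lap_vec w m ` eigX \<subseteq> eigX"
proof
  fix y assume "y \<in> neg_lap_vec w m ` eigX"
  then obtain f l where l: "l \<in> eigenvalues_nl w m" and f: "f \<in> eigenspace_nl w m l" and y: "y = neg_lap_vec w m f"
    unfolding eigX_def by blast
  have "y = l *\<^sub>R f" using f y by (simp add: eigenspace_nl_def)
  then have "y \<in> eigenspace_nl w m l" using subspace_scale[OF subspace_eigsp f] by simp
  then show "y \<in> eigX" using l unfolding eigX_def by blast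
qed

lemma NL_U: "u \<in> span eigX \<Longrightarrow> neg_lap_vec w m u \<in> span eigX"
proof -
  assume u: "u \<in> span eigX"
  have "neg_lap_vec w m ` span eigX \<subseteq> span (neg_lap_vec w m ` eigX)"
    by (rule linear_spans_image[OF linear_nl]) simp
  also have "\<dots> \<subseteq> span eigX" using NL_X by (rule span_mono)
  finally show ?thesis using u by blast
qed

lemma abs_le_sq: "\<bar>a::real\<bar> \<le> 1 + a * a"
proof -
  have "0 \<le> (\<bar>a\<bar> - 1) * (\<bar>a\<bar> - 1)" by simp
  moreover have "\<bar>a\<bar> * \<bar>a\<bar> = a * a" by (simp add: abs_mult_self_eq)
  ultimately show ?thesis by (simp add: algebra_simps)
qed

end


context
  fixes w :: "'v::finite \<Rightarrow> 'v \<Rightarrow> real" and m :: "'v \<Rightarrow> real"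
  assumes wg: "weighted_graph w m"
begin

lemma NL_add_scale: "neg_lap_vec w m (u + t *\<^sub>R v) = neg_lap_vec w m u + t *\<^sub>R neg_lap_vec w m v"
  by (simp add: linear_add[OF linear_nl] linear_scale[OF linear_nl])

lemma NL_scale: "neg_lap_vec w m (t *\<^sub>R v) = t *\<^sub>R neg_lap_vec w m v"
  by (simp add: linear_scale[OF linear_nl])

lemma NL_zero: "neg_lap_vec w m 0 = 0"
  by (simp add: linear_0[OF linear_nl])

lemma cont_ipm: "continuous_on UNIV (\<lambda>u::real^'v. ipm m u u)"
  unfolding ipm_def by (intro continuous_intros)

lemma cont_q: "continuous_on UNIV (\<lambda>u::real^'v. ipm m (neg_lap_vec w m u) u)"
  unfolding ipm_def neg_lap_vec_def lap_def by (simp only: vec_lambda_beta) (intro continuous_intros)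

lemma U_UNIV: "span (eigX w m) = UNIV"
proof (rule ccontr)
  let ?U = "span (eigX w m)"
  let ?NL = "neg_lap_vec w m"
  assume UU: "?U \<noteq> UNIV"
  have subU: "subspace ?U" by (rule subspace_span)
  have "dim ?U < CARD('v)"
  proof -
    have "dim ?U \<le> CARD('v)" by (rule dim_subset_UNIV_cart)
    moreover have "dim ?U \<noteq> CARD('v)"
    proof
      assume "dim ?U = CARD('v)"
      then have "?U = UNIV" using subspace_dim_equal[OF subU subspace_UNIV subset_UNIV] by simp
      then show False using UU by simp
    qed
    ultimately show ?thesis by simp
  qed
  then have dU: "dim ?U < DIM(real^'v)" by simp
  obtain z where z0: "z \<noteq> 0" and zU: "\<And>y. y \<in> span ?U \<Longrightarrow> orthogonal z y"
    using orthogonal_to_subspace_exists[OF dU] by blast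
  define u0 :: "real^'v" where "u0 = (\<chi> x. z $ x / m x)"
  have u0e: "ipm m u0 e = 0" if "e \<in> ?U" for e
  proof -
    have "ipm m u0 e = z \<bullet> e"
      unfolding ipm_def u0_def inner_vec_def
    proof (intro sum.cong refl)
      fix x show "m x * ((\<chi> x. z $ x / m x) $ x * e $ x) = z $ x \<bullet> e $ x"
        using mpos[OF wg, of x] by simp
    qed
    also have "\<dots> = 0" using zU[of e] that span_base[of e ?U] by (simp add: orthogonal_def)
    finally show ?thesis .
  qed
  have u00: "u0 \<noteq> 0"
  proof
    assume "u0 = 0"
    then have h: "u0 $ x = 0" for x by simp
    have "z $ x = 0" for x using h[of x] mpos[OF wg, of x] by (simp add: u0_def)
    then show False using z0 by (simp add: vec_eq_iff)
  qed
  define V where "V = {u. \<forall>e\<in>?U. ipm m u e = 0}"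
  have subV: "subspace V"
    unfolding subspace_def V_def by (simp add: ipm_add_left ipm_scale_left)
  have u0V: "u0 \<in> V" using u0e by (simp add: V_def)
  have NLV: "?NL u \<in> V" if "u \<in> V" for u
  proof -
    have "ipm m (?NL u) e = 0" if "e \<in> ?U" for e
    proof -
      have "?NL e \<in> ?U" using NL_U[OF wg] that by blast
      then have "ipm m u (?NL e) = 0" using \<open>u \<in> V\<close> by (simp add: V_def)
      then show ?thesis by (simp add: self_adj[OF wg])
    qed
    then show ?thesis by (simp add: V_def)
  qed
  define S where "S = V \<inter> {u. ipm m u u = 1}"
  define q where "q u = ipm m (?NL u) u" for u
  have Sne: "S \<noteq> {}"
  proof -
    define p where "p = ipm m u0 u0"
    have p: "p > 0" using ipm_nonneg[OF wg, of u0] ipm_eq0[OF wg, of u0] u00 by (simp add: p_def)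
    define u1 where "u1 = (1 / sqrt p) *\<^sub>R u0"
    have "u1 \<in> V" using subspace_scale[OF subV u0V] by (simp add: u1_def)
    moreover have "ipm m u1 u1 = 1"
      using p by (simp add: u1_def ipm_scale_left ipm_scale_right p_def[symmetric])
    ultimately show ?thesis by (auto simp: S_def)
  qed
  have closedS: "closed S"
  proof -
    have "closed V" by (rule closed_subspace[OF subV])
    moreover have "closed {u::real^'v. ipm m u u = 1}"
      using closed_Collect_eq[OF cont_ipm continuous_on_const] by simp
    ultimately show ?thesis by (simp add: S_def closed_Int)
  qed
  have boundedS: "bounded S"
    unfolding bounded_iff
  proof (intro exI ballI)
    fix u assume uS: "u \<in> S"
    have "\<bar>u $ i\<bar> \<le> 1 + 1 / m i" for i
    proof -
      have "m i * (u $ i * u $ i) \<le> ipm m u u"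
        unfolding ipm_def by (rule member_le_sum) (auto intro: ipm_term_nonneg[OF wg])
      then have "m i * (u $ i * u $ i) \<le> 1" using uS by (simp add: S_def)
      then have "u $ i * u $ i \<le> 1 / m i" using mpos[OF wg, of i] by (simp add: field_simps)
      then show ?thesis using abs_le_sq[OF wg, of "u $ i"] by linarith
    qed
    then have "(\<Sum>i\<in>UNIV. \<bar>u $ i\<bar>) \<le> (\<Sum>i\<in>UNIV. 1 + 1 / m i)" by (intro sum_mono)
    then show "norm u \<le> (\<Sum>i\<in>UNIV. 1 + 1 / m i)" using norm_le_l1_cart[of u] by linarith
  qed
  have "compact S" using closedS boundedS by (simp add: compact_eq_bounded_closed)
  moreover have "continuous_on S q" unfolding q_def using cont_q continuous_on_subset by blast
  ultimately obtain u where uS: "u \<in> S" and umax: "\<And>y. y \<in> S \<Longrightarrow> q y \<le> q u"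
    using continuous_attains_sup[of S q] Sne by blast
  define M where "M = q u"
  have uV: "u \<in> V" and uu: "ipm m u u = 1" using uS by (auto simp: S_def)
  have qscale: "q (c *\<^sub>R y) = c * c * q y" for c y
    by (simp add: q_def NL_scale ipm_scale_left ipm_scale_right)
  have key: "0 \<le> t * (2 * M * ipm m u v - 2 * ipm m (?NL u) v) + t^2 * (M * ipm m v v - q v)"
    if vV: "v \<in> V" for v t
  proof -
    define y where "y = u + t *\<^sub>R v"
    define p where "p = ipm m y y"
    have yV: "y \<in> V" using subspace_add[OF subV uV subspace_scale[OF subV vV]] by (simp add: y_def)
    have qy: "q y \<le> M * p"
    proof (cases "p = 0")
      case True
      then have "y = 0" using ipm_eq0[OF wg] by (simp add: p_def)
      then show ?thesis using True by (simp add: q_def NL_zero)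
    next
      case False
      then have p: "p > 0" using ipm_nonneg[OF wg, of y] by (simp add: p_def)
      define y' where "y' = (1 / sqrt p) *\<^sub>R y"
      have "y' \<in> V" using subspace_scale[OF subV yV] by (simp add: y'_def)
      moreover have "ipm m y' y' = 1"
        using p by (simp add: y'_def ipm_scale_left ipm_scale_right p_def[symmetric])
      ultimately have "y' \<in> S" by (simp add: S_def)
      then have "q y' \<le> M" using umax by (simp add: M_def)
      moreover have "q y' = q y / p" using p by (simp add: y'_def qscale)
      ultimately show ?thesis using p by (simp add: field_simps)
    qed
    have e1: "q y = M + t * (2 * ipm m (?NL u) v) + t^2 * q v"
    proof -
      have "ipm m (?NL v) u = ipm m (?NL u) v"
        using self_adj[OF wg, of v u] ipm_sym[of m v "?NL u"] by simp
      then show ?thesis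
        by (simp add: q_def y_def M_def NL_add_scale ipm_add_left ipm_add_right ipm_scale_left ipm_scale_right
            power2_eq_square algebra_simps)
    qed
    have e2: "p = 1 + t * (2 * ipm m u v) + t^2 * ipm m v v"
      using uu by (simp add: p_def y_def ipm_add_left ipm_add_right ipm_scale_left ipm_scale_right
            ipm_sym[of m v u] power2_eq_square algebra_simps)
    show ?thesis using qy e1 e2 by (simp add: algebra_simps)
  qed
  have orth: "ipm m (?NL u) v = M * ipm m u v" if "v \<in> V" for v
  proof -
    have "2 * M * ipm m u v - 2 * ipm m (?NL u) v = 0"
      by (rule quad_zero[of _ "M * ipm m v v - q v"]) (use key[OF that] in \<open>simp add: mult.commute\<close>)
    then show ?thesis by simp
  qed
  define r where "r = ?NL u - M *\<^sub>R u"
  have rV: "r \<in> V" unfolding r_def by (rule subspace_diff[OF subV NLV[OF uV] subspace_scale[OF subV uV]])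
  have "ipm m r r = 0"
    using orth[OF rV] by (simp add: r_def ipm_diff_left ipm_scale_left)
  then have "r = 0" using ipm_eq0[OF wg] by simp
  then have eig: "?NL u = M *\<^sub>R u" by (simp add: r_def)
  have u0': "u \<noteq> 0" using uu by auto
  then have "M \<in> eigenvalues_nl w m" using eig by (auto simp: eigenvalues_nl_def)
  moreover have "u \<in> eigenspace_nl w m M" using eig by (simp add: eigenspace_nl_def)
  ultimately have "u \<in> ?U" by (intro span_base in_eigX[OF wg])
  then have "ipm m u u = 0" using uV by (simp add: V_def)
  then show False using uu by simp
qed

end


lemma idx_lemma:
  fixes L :: "real list" and c :: "real \<Rightarrow> nat"
  assumes "sorted L" "distinct L"
    and "i < length (concat (map (\<lambda>l. replicate (c l) l) L))"
    and "concat (map (\<lambda>l. replicate (c l) l) L) ! i = v"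
  shows "i < sum_list (map c (filter (\<lambda>l. l \<le> v) L))"
  using assms
proof (induction L arbitrary: i)
  case Nil then show ?case by simp
next
  case (Cons a L)
  let ?xs = "concat (map (\<lambda>l. replicate (c l) l) L)"
  have eq: "concat (map (\<lambda>l. replicate (c l) l) (a # L)) = replicate (c a) a @ ?xs" by simp
  show ?case
  proof (cases "i < c a")
    case True
    then have "a = v" using Cons.prems(4) by (simp add: eq nth_append)
    then show ?thesis using True by simp
  next
    case False
    then have i: "i - c a < length ?xs" "?xs ! (i - c a) = v"
      using Cons.prems(3,4) by (simp_all add: eq nth_append)
    have IH: "i - c a < sum_list (map c (filter (\<lambda>l. l \<le> v) L))"
      using Cons.IH[OF _ _ i] Cons.prems(1,2) by simp
    have "v \<in> set ?xs" using i by (metis nth_mem)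
    then have "v \<in> set L" by auto
    then have "a \<le> v" using Cons.prems(1) by simp
    then show ?thesis using IH False by simp
  qed
qed

context
  fixes w :: "'v::finite \<Rightarrow> 'v \<Rightarrow> real" and m :: "'v \<Rightarrow> real"
  assumes wg: "weighted_graph w m"
begin

lemma length_ge: "CARD('v) \<le> length (eig_list w m)"
proof -
  let ?S = "eigenvalues_nl w m"
  have fin: "finite ?S" by (rule finite_eigs[OF wg])
  have "length (eig_list w m) = sum_list (map (\<lambda>l. dim (eigenspace_nl w m l)) (sorted_list_of_set ?S))"
    by (simp add: eig_list_def length_concat o_def)
  also have "\<dots> = (\<Sum>l\<in>?S. dim (eigenspace_nl w m l))"
    using fin by (simp add: sum_list_distinct_conv_sum_set)
  finally have len: "length (eig_list w m) = (\<Sum>l\<in>?S. dim (eigenspace_nl w m l))" .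
  have "CARD('v) = dim (UNIV :: (real^'v) set)" by simp
  also have "\<dots> = dim (eigX w m)" using U_UNIV[OF wg] dim_span by metis
  also have "\<dots> \<le> (\<Sum>l\<in>?S. dim (eigenspace_nl w m l))"
    unfolding eigX_eq[OF wg] by (rule dim_UN_le[OF fin])
  finally show ?thesis using len by simp
qed

lemma deg_le_max: "deg w x \<le> deg_max w"
  unfolding deg_max_def by (rule Max_ge) auto

lemma deg_max_less: "deg_max w < CARD('v)"
proof -
  have "deg_max w \<in> range (deg w)" unfolding deg_max_def by (rule Max_in) auto
  then obtain x where x: "deg_max w = deg w x" by auto
  have "x \<notin> {y. w x y > 0}" using wxx[OF wg, of x] by simp
  then have "{y. w x y > 0} \<subset> UNIV" by blast
  then have "card {y. w x y > 0} < CARD('v)" by (rule psubset_card_mono[OF finite])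
  then show ?thesis using x by (simp add: deg_def)
qed

lemma gam0_const:
  assumes conn: "connected_graph w" and g0: "\<And>x. Gam w m f f x = 0"
  shows "f u = f v"
proof -
  have adj_eq: "f b = f a" if "w a b > 0" for a b
  proof -
    have "(\<Sum>y\<in>UNIV. w a y * (f y - f a) * (f y - f a)) = 0"
      using g0[of a] mpos[OF wg, of a] by (simp add: Gam_eq)
    then have "\<forall>y\<in>UNIV. w a y * (f y - f a) * (f y - f a) = 0"
      by (subst sum_nonneg_eq_0_iff[symmetric]) (auto simp: mult.assoc intro: mult_nonneg_nonneg[OF wnn[OF wg] zero_le_square])
    then have "w a b * (f b - f a) * (f b - f a) = 0" by blast
    then show ?thesis using that by simp
  qed
  have "(v, u) \<in> (adj w)\<^sup>*" using conn by (simp add: connected_graph_def)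
  then show ?thesis
  proof (induction rule: rtrancl_induct)
    case (step y z) then show ?case using adj_eq[of y z] by (simp add: adj_def)
  qed simp
qed

end

context
  fixes w :: "'v::finite \<Rightarrow> 'v \<Rightarrow> real" and m :: "'v \<Rightarrow> real" and K :: real
  assumes wg: "weighted_graph w m" and cd: "CD_inf w m K" and conn: "connected_graph w"
begin

lemma dimE0: "dim (eigenspace_nl w m 0) \<le> 1"
proof -
  define one :: "real^'v" where "one = (\<chi> x. 1)"
  have "eigenspace_nl w m 0 \<subseteq> span {one}"
  proof
    fix f assume f: "f \<in> eigenspace_nl w m 0"
    then have lapf: "lap w m (\<lambda>y. f $ y) x = 0" for x by (simp add: eigsp_iff)
    have "(\<Sum>x\<in>UNIV. m x * Gam w m (\<lambda>y. f $ y) (\<lambda>y. f $ y) x) = 0"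
      using sum_Gam_lap[OF wg, of "\<lambda>y. f $ y" "\<lambda>y. f $ y"] lapf by simp
    then have "\<forall>x\<in>UNIV. m x * Gam w m (\<lambda>y. f $ y) (\<lambda>y. f $ y) x = 0"
      by (subst sum_nonneg_eq_0_iff[symmetric])
         (auto intro!: mult_nonneg_nonneg less_imp_le[OF mpos[OF wg]] Gam_nonneg[OF wg])
    then have "Gam w m (\<lambda>y. f $ y) (\<lambda>y. f $ y) x = 0" for x
      using mpos[OF wg, of x] by (metis UNIV_I less_irrefl mult_eq_0_iff)
    then have c: "f $ u = f $ v" for u v by (rule gam0_const[OF wg conn])
    have "f = (f $ undefined) *\<^sub>R one"
      unfolding one_def vec_eq_iff using c by simp
    then show "f \<in> span {one}" by (metis span_base span_mul singletonI scaleR_conv_of_real)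
  qed
  then have "dim (eigenspace_nl w m 0) \<le> card {one}" by (intro dim_le_card) auto
  then show ?thesis by simp
qed

lemma dimEK:
  assumes Kpos: "K > 0" and hyp: "eig_list w m ! deg_max w = K"
  shows "deg_max w \<le> dim (eigenspace_nl w m K)"
proof -
  let ?S = "eigenvalues_nl w m"
  let ?c = "\<lambda>l. dim (eigenspace_nl w m l)"
  let ?L = "sorted_list_of_set ?S"
  have fin: "finite ?S" by (rule finite_eigs[OF wg])
  have el: "eig_list w m = concat (map (\<lambda>l. replicate (?c l) l) ?L)" by (simp add: eig_list_def)
  have "deg_max w < length (eig_list w m)"
    using deg_max_less[OF wg] length_ge[OF wg] by linarith
  then have "deg_max w < sum_list (map ?c (filter (\<lambda>l. l \<le> K) ?L))"
    using idx_lemma[where L="?L" and c="?c" and i="deg_max w" and v=K] hyp el by simp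
  also have "sum_list (map ?c (filter (\<lambda>l. l \<le> K) ?L)) = sum ?c {l\<in>?S. l \<le> K}"
    using fin by (simp add: sum_list_distinct_conv_sum_set)
  also have "\<dots> \<le> sum ?c {0, K}"
  proof (rule sum_mono2)
    show "{l\<in>?S. l \<le> K} \<subseteq> {0, K}"
    proof
      fix l assume l: "l \<in> {l\<in>?S. l \<le> K}"
      then obtain f where f0: "f \<noteq> 0" and fe: "neg_lap_vec w m f = l *\<^sub>R f"
        by (auto simp: eigenvalues_nl_def)
      obtain y where "f $ y \<noteq> 0" using f0 by (auto simp: vec_eq_iff)
      moreover have "lap w m (\<lambda>y. f $ y) x = - l * f $ x" for x
        using fe eigsp_iff[of f w m l] by (simp add: eigenspace_nl_def)
      ultimately have "l = 0 \<or> l \<ge> K" using eigval_cases[OF wg cd] by blast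
      then show "l \<in> {0, K}" using l by auto
    qed
  qed auto
  also have "\<dots> = ?c 0 + ?c K" using Kpos by simp
  finally show ?thesis using dimE0 by linarith
qed

end


theorem lemma3:
  fixes w :: "'v::finite \<Rightarrow> 'v \<Rightarrow> real" and m :: "'v \<Rightarrow> real" and K :: real
  assumes "weighted_graph w m"
    and "connected_graph w"
    and "K > 0"
    and "CD_inf w m K"
    and "eig_list w m ! deg_max w = K"
  shows "\<forall>x0 y. Gam2 w m (\<lambda>x. real (comb_dist w x0 x)) (\<lambda>x. real (comb_dist w x0 x)) y
               = K * Gam w m (\<lambda>x. real (comb_dist w x0 x)) (\<lambda>x. real (comb_dist w x0 x)) y"
proof (intro allI)
  fix x0 y
  have "deg_max w \<le> dim (eigenspace_nl w m K)"
    by (rule dimEK[OF assms(1) assms(4) assms(2) assms(3) assms(5)])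
  moreover have "deg w x0 \<le> deg_max w" by (rule deg_le_max[OF assms(1)])
  ultimately have "good w m K (\<lambda>x. real (comb_dist w x0 x))"
    by (intro dist_good_from_dim[OF assms(1) assms(4) assms(2) assms(3)]) simp
  then show "Gam2 w m (\<lambda>x. real (comb_dist w x0 x)) (\<lambda>x. real (comb_dist w x0 x)) y
               = K * Gam w m (\<lambda>x. real (comb_dist w x0 x)) (\<lambda>x. real (comb_dist w x0 x)) y"
    by (simp add: good_def)
qed


end
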